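(* For any $n\geq 1$, $R_n$ listed in both Reflected Gray Code Order $\prec$ and co-Reflected Gray Code Order is a $3$-adjacent Gray code.
   Context: A restricted growth function of length $n$ is an integer sequence $s_1s_2\ldots s_n$ with $s_1=0$ and $0\leq s_{i+1}\leq \max\{s_j\}_{j=1}^i+1$ for $1\leq i\leq n-1$; $R_n$ is the set of these. On $\{0,1,\ldots,m-1\}^n$ ($m\geq2$), let $k$ be the first position where $s_1\ldots s_n$ and $t_1\ldots t_n$ differ. Reflected Gray Code Order $\prec$: $\mathbf s\prec\mathbf t$ if either $\sum_{i=1}^{k-1}s_i$ is even and $s_k<t_k$, or it is odd and $s_k>t_k$. co-Reflected Gray Code Order: $\mathbf s$ is less than $\mathbf t$ if either $U_k$ is even and $s_k<t_k$, or $U_k$ is odd and $s_k>t_k$, where $U_k=|\{i\in\{1,\ldots,k-1\}: s_i\neq0,\ s_i \text{ even}\}|$. A list of same-length sequences is a $d$-adjacent Gray code if successive sequences differ in at most $d$ positions and these positions are adjacent. *)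

theory Defs
  imports Main
begin

text \<open>Sequences are lists of naturals, 0-indexed (paper position i+1 = list index i).\<close>

definition RGF :: "nat \<Rightarrow> nat list set" where
  "RGF n = {s. length s = n \<and> (0 < n \<longrightarrow> s ! 0 = 0) \<and>
     (\<forall>i. Suc i < n \<longrightarrow> s ! Suc i \<le> Max (set (take (Suc i) s)) + 1)}"

definition rgc_less :: "nat list \<Rightarrow> nat list \<Rightarrow> bool" where
  "rgc_less s t \<longleftrightarrow> length s = length t \<and>
     (\<exists>k < length s. take k s = take k t \<and> s ! k \<noteq> t ! k \<and>
        (if even (sum_list (take k s)) then s ! k < t ! k else s ! k > t ! k))"

definition co_rgc_less :: "nat list \<Rightarrow> nat list \<Rightarrow> bool" where
  "co_rgc_less s t \<longleftrightarrow> length s = length t \<and>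
     (\<exists>k < length s. take k s = take k t \<and> s ! k \<noteq> t ! k \<and>
        (if even (card {i. i < k \<and> s ! i \<noteq> 0 \<and> even (s ! i)})
         then s ! k < t ! k else s ! k > t ! k))"

definition diff_positions :: "nat list \<Rightarrow> nat list \<Rightarrow> nat set" where
  "diff_positions s t = {i. i < length s \<and> s ! i \<noteq> t ! i}"

definition adjacent_gray_code :: "nat \<Rightarrow> nat list list \<Rightarrow> bool" where
  "adjacent_gray_code d L \<longleftrightarrow>
     (\<forall>j. Suc j < length L \<longrightarrow>
        (let D = diff_positions (L ! j) (L ! Suc j) in
          card D \<le> d \<and> (\<forall>a b c. a \<in> D \<longrightarrow> c \<in> D \<longrightarrow> a \<le> b \<longrightarrow> b \<le> c \<longrightarrow> b \<in> D)))"

end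

theory Submission
  imports Defs
begin

lemma RGF_bound:
  assumes "s \<in> RGF n" "0 < m" "m < n"
  shows "s ! m \<le> Max (set (take m s)) + 1"
proof -
  obtain i where "m = Suc i" using assms(2) by (cases m) auto
  thus ?thesis using assms unfolding RGF_def by auto
qed

lemma take_RGF:
  assumes "s \<in> RGF n" "m \<le> n"
  shows "take m s \<in> RGF m"
  using assms unfolding RGF_def by (auto simp: min_def)

lemma RGF_snoc:
  assumes "q \<in> RGF (length q)" "q \<noteq> []" "v \<le> Max (set q) + 1"
  shows "q @ [v] \<in> RGF (Suc (length q))"
  unfolding RGF_def
proof (intro CollectI conjI allI impI)
  show "length (q @ [v]) = Suc (length q)" by simp
  show "(q @ [v]) ! 0 = 0" using assms unfolding RGF_def by (auto simp: nth_append)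
  fix i assume i: "Suc i < Suc (length q)"
  show "(q @ [v]) ! Suc i \<le> Max (set (take (Suc i) (q @ [v]))) + 1"
  proof (cases "Suc i < length q")
    case True
    then show ?thesis using assms(1) unfolding RGF_def by (auto simp: nth_append)
  next
    case False
    then have "Suc i = length q" using i by simp
    then show ?thesis using assms(3) by (simp add: nth_append)
  qed
qed

lemma Max_snoc_succ:
  fixes q :: "nat list"
  assumes "q \<noteq> []"
  shows "Max (set (q @ [Max (set q) + 1])) = Max (set q) + 1"
proof -
  have "set (q @ [Max (set q) + 1]) = insert (Max (set q) + 1) (set q)" by simp
  moreover have "\<forall>x\<in>set q. x \<le> Max (set q)" by simp
  ultimately show ?thesis using assms
    by (auto simp: Max_insert max_def)
qed

locale gord =
  fixes D :: "nat list \<Rightarrow> bool" and E :: "nat \<Rightarrow> bool"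
  assumes D_snoc: "D (q @ [v]) = (D q = E v)"
    and E0: "E 0"
    and ESS: "E (Suc m) \<Longrightarrow> \<not> E (Suc (Suc m))"
begin

definition lt :: "nat list \<Rightarrow> nat list \<Rightarrow> bool" where
  "lt s t \<longleftrightarrow> length s = length t \<and> (\<exists>k < length s. take k s = take k t \<and> s ! k \<noteq> t ! k \<and>
        (if D (take k s) then s ! k < t ! k else s ! k > t ! k))"

definition ch :: "bool \<Rightarrow> nat list \<Rightarrow> nat" where
  "ch c q = (if D q = c then 0 else Max (set q) + 1)"

fun g :: "bool \<Rightarrow> nat list \<Rightarrow> nat \<Rightarrow> nat list" where
  "g c q 0 = q" | "g c q (Suc r) = g c (q @ [ch c q]) r"

lemma D_snoc2: "D (q @ [v, w]) = (D (q @ [v]) = E w)"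
  using D_snoc[of "q @ [v]" w] by simp

lemma len_g: "length (g c q r) = length q + r"
  by (induction r arbitrary: q) auto

lemma g_app: "\<exists>tl. g c q r = q @ tl"
proof (induction r arbitrary: q)
  case 0 then show ?case by simp
next
  case (Suc r)
  then obtain tl where "g c (q @ [ch c q]) r = (q @ [ch c q]) @ tl" by blast
  then show ?case by auto
qed

lemma g_add: "g c q (a + b) = g c (g c q a) b"
  by (induction a arbitrary: q) auto

lemma lt_asym: "lt s t \<Longrightarrow> \<not> lt t s"
proof
  assume 1: "lt s t" and 2: "lt t s"
  obtain k where k: "k < length s" "take k s = take k t" "s ! k \<noteq> t ! k"
    "if D (take k s) then s ! k < t ! k else s ! k > t ! k" using 1 unfolding lt_def by blast
  obtain j where j: "j < length t" "take j t = take j s" "t ! j \<noteq> s ! j"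
    "if D (take j t) then t ! j < s ! j else t ! j > s ! j" using 2 unfolding lt_def by blast
  have "\<not> k < j"
  proof
    assume "k < j"
    then have "take j s ! k = take j t ! k" using j(2) by simp
    then show False using \<open>k < j\<close> k(3) by simp
  qed
  moreover have "\<not> j < k"
  proof
    assume "j < k"
    then have "take k s ! j = take k t ! j" using k(2) by simp
    then show False using \<open>j < k\<close> j(3) by simp
  qed
  ultimately have "j = k" by simp
  then show False using k j by (auto split: if_splits)
qed

lemma zeros: "D q = c \<Longrightarrow> length q \<le> i \<Longrightarrow> i < length q + r \<Longrightarrow> g c q r ! i = 0"
proof (induction r arbitrary: q)
  case 0 then show ?case by simp
next
  case (Suc r)
  have ch0: "ch c q = 0" using Suc.prems by (simp add: ch_def)
  have D0: "D (q @ [0]) = c" using Suc.prems by (simp add: D_snoc E0)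
  show ?case
  proof (cases "i = length q")
    case True
    obtain tl where "g c (q @ [0]) r = (q @ [0]) @ tl" using g_app by blast
    then show ?thesis using True ch0 by (simp add: nth_append)
  next
    case False
    then show ?thesis using Suc.IH[OF D0] Suc.prems ch0 by simp
  qed
qed

lemma two_steps:
  assumes "q \<noteq> []"
  shows "D (q @ [ch c q, ch c (q @ [ch c q])]) = c"
proof (cases "D q = c")
  case True
  then have "ch c q = 0" by (simp add: ch_def)
  moreover have "D (q @ [0]) = c" using True by (simp add: D_snoc E0)
  moreover then have "ch c (q @ [0]) = 0" by (simp add: ch_def)
  moreover have "D ((q @ [0]) @ [0]) = c" using \<open>D (q @ [0]) = c\<close> by (simp only: D_snoc E0) simp
  ultimately show ?thesis by simp
next
  case False
  define M where "M = Max (set q)"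
  have x1: "ch c q = Suc M" using False by (simp add: ch_def M_def)
  show ?thesis
  proof (cases "E (Suc M)")
    case True
    have Dq1: "D (q @ [Suc M]) = D q" using True by (simp add: D_snoc)
    have Mx: "Max (set (q @ [Suc M])) = Suc M" using Max_snoc_succ[OF assms] by (simp add: M_def)
    have x2: "ch c (q @ [Suc M]) = Suc (Suc M)" using Dq1 False Mx by (simp add: ch_def)
    have "D ((q @ [Suc M]) @ [Suc (Suc M)]) = c" using Dq1 False ESS[OF True]
      by (simp only: D_snoc) simp
    then show ?thesis using x1 x2 by simp
  next
    case F2: False
    have Dq1: "D (q @ [Suc M]) = c" using F2 False by (simp add: D_snoc)
    then have x2: "ch c (q @ [Suc M]) = 0" by (simp add: ch_def)
    have "D ((q @ [Suc M]) @ [0]) = c" using Dq1 by (simp only: D_snoc E0) simp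
    then show ?thesis using x1 x2 by simp
  qed
qed

lemma zeros2:
  assumes "q \<noteq> []" "length q + 2 \<le> i" "i < length q + r"
  shows "g c q r ! i = 0"
proof -
  have r: "r = 2 + (r - 2)" using assms by simp
  have g2: "g c q 2 = q @ [ch c q, ch c (q @ [ch c q])]" by (simp add: numeral_2_eq_2)
  have "g c q r = g c (g c q 2) (r - 2)" using g_add r by metis
  also have "\<dots> ! i = 0"
    using zeros[OF two_steps[OF assms(1)], where i=i and r="r - 2"] assms g2 by simp
  finally show ?thesis .
qed

lemma g_RGF:
  assumes "q \<in> RGF (length q)" "q \<noteq> []"
  shows "g c q r \<in> RGF (length q + r)"
  using assms
proof (induction r arbitrary: q)
  case 0 then show ?case by simp
next
  case (Suc r)
  have "q @ [ch c q] \<in> RGF (Suc (length q))"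
    using Suc.prems by (intro RGF_snoc) (auto simp: ch_def)
  then show ?case using Suc.IH[of "q @ [ch c q]"] by simp
qed

lemma extremal:
  assumes "s \<in> RGF n" "length q + r = n" "take (length q) s = q" "q \<noteq> []"
  shows "s = g c q r \<or> (if c then lt (g c q r) s else lt s (g c q r))"
  using assms
proof (induction r arbitrary: q)
  case 0
  then have "length s = length q" unfolding RGF_def by simp
  then show ?case using 0 by simp
next
  case (Suc r)
  define m where "m = length q"
  have ls: "length s = n" using Suc.prems unfolding RGF_def by simp
  have mn: "m < n" using Suc.prems m_def by simp
  have bd: "s ! m \<le> Max (set q) + 1"
    using RGF_bound[OF Suc.prems(1), of m] mn Suc.prems m_def by simp
  show ?case
  proof (cases "s ! m = ch c q")
    case True
    have "take (Suc m) s = q @ [ch c q]"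
      using True mn ls Suc.prems(3) m_def by (simp add: take_Suc_conv_app_nth)
    then have "s = g c (q @ [ch c q]) r \<or> (if c then lt (g c (q @ [ch c q]) r) s else lt s (g c (q @ [ch c q]) r))"
      using Suc.IH[of "q @ [ch c q]"] Suc.prems m_def by simp
    then show ?thesis by (cases c) simp_all
  next
    case False
    define G where "G = g c q (Suc r)"
    obtain tl where tl: "g c (q @ [ch c q]) r = (q @ [ch c q]) @ tl" using g_app by blast
    have G: "G = q @ (ch c q # tl)" using tl G_def by simp
    have lG: "length G = n" using len_g Suc.prems G_def by simp
    have Gm: "G ! m = ch c q" using G m_def by (simp add: nth_append)
    have tG: "take m G = q" using G m_def by simp
    have ts: "take m s = q" using Suc.prems m_def by simp
    have "if c then lt G s else lt s G"
    proof (cases c)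
      case True
      have "lt G s" unfolding lt_def
        using lG ls mn tG ts Gm False bd True
        by (intro conjI exI[of _ m]) (auto simp: ch_def)
      then show ?thesis using True by simp
    next
      case F: False
      have "lt s G" unfolding lt_def
        using lG ls mn tG ts Gm False bd F
        by (intro conjI exI[of _ m]) (auto simp: ch_def)
      then show ?thesis using F by simp
    qed
    then show ?thesis using G_def by (cases c) simp_all
  qed
qed

lemma adj:
  assumes sR: "s \<in> RGF n" and tR: "t \<in> RGF n" and st: "lt s t"
    and nb: "\<forall>u\<in>RGF n. \<not> (lt s u \<and> lt u t)"
  shows "card (diff_positions s t) \<le> 3 \<and>
    (\<forall>a b c. a \<in> diff_positions s t \<longrightarrow> c \<in> diff_positions s t \<longrightarrow> a \<le> b \<longrightarrow> b \<le> c
       \<longrightarrow> b \<in> diff_positions s t)"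
proof -
  obtain k where k: "k < length s" "take k s = take k t" "s ! k \<noteq> t ! k"
    "if D (take k s) then s ! k < t ! k else s ! k > t ! k" using st unfolding lt_def by blast
  have ls: "length s = n" and lt': "length t = n" using sR tR unfolding RGF_def by auto
  have k0: "k \<noteq> 0"
  proof
    assume "k = 0"
    then show False using sR tR k ls lt' unfolding RGF_def by auto
  qed
  define p where "p = take k s"
  define a where "a = s ! k"
  define b where "b = t ! k"
  define r where "r = n - Suc k"
  have lp: "length p = k" unfolding p_def using k(1) by simp
  have pne: "p \<noteq> []" using lp k0 by auto
  have tks: "take (Suc k) s = p @ [a]" using k p_def a_def by (simp add: take_Suc_conv_app_nth)
  have tkt: "take (Suc k) t = p @ [b]" using k p_def b_def ls lt' by (simp add: take_Suc_conv_app_nth)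
  define S where "S = g False (p @ [a]) r"
  define T where "T = g True (p @ [b]) r"
  have pa_R: "p @ [a] \<in> RGF (length (p @ [a]))" using take_RGF[OF sR, of "Suc k"] tks k ls lp by simp
  have pb_R: "p @ [b] \<in> RGF (length (p @ [b]))" using take_RGF[OF tR, of "Suc k"] tkt k ls lt' lp by simp
  have kr: "Suc (k + r) = n" using r_def k ls by simp
  have SR: "S \<in> RGF n" using g_RGF[OF pa_R, of False r] S_def lp kr by simp
  have TR: "T \<in> RGF n" using g_RGF[OF pb_R, of True r] T_def lp kr by simp
  obtain tlS where tlS: "S = (p @ [a]) @ tlS" using g_app S_def by blast
  obtain tlT where tlT: "T = (p @ [b]) @ tlT" using g_app T_def by blast
  have lS: "length S = n" and lT: "length T = n" using len_g S_def T_def lp r_def k ls by auto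
  have sS: "s = S"
  proof (rule ccontr)
    assume ne: "s \<noteq> S"
    have "lt s S" using extremal[OF sR, of "p @ [a]" r False] ne tks lp r_def k ls S_def by simp
    moreover have "lt S t" unfolding lt_def
      using lS lt' k tlS p_def a_def lp ls by (intro conjI exI[of _ k]) (auto simp: nth_append)
    ultimately show False using nb SR by blast
  qed
  have tT: "t = T"
  proof (rule ccontr)
    assume ne: "t \<noteq> T"
    have "lt T t" using extremal[OF tR, of "p @ [b]" r True] ne tkt lp r_def k ls T_def lt' by simp
    moreover have "lt s T" unfolding lt_def
      using lT ls k tlT p_def b_def lp by (intro conjI exI[of _ k]) (auto simp: nth_append)
    ultimately show False using nb TR by blast
  qed
  define DP where "DP = diff_positions s t"
  have sub: "DP \<subseteq> {k, Suc k, Suc (Suc k)}"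
  proof
    fix i assume i: "i \<in> DP"
    then have iN: "i < n" "s ! i \<noteq> t ! i" using ls unfolding DP_def diff_positions_def by auto
    have "\<not> i < k"
    proof
      assume "i < k"
      then have "take k s ! i = take k t ! i" using k(2) by simp
      then show False using \<open>i < k\<close> iN by simp
    qed
    moreover have "\<not> Suc (Suc k) < i"
    proof
      assume h: "Suc (Suc k) < i"
      have "S ! i = 0" using zeros2[of "p @ [a]" i r False] h iN lp r_def k ls S_def by simp
      moreover have "T ! i = 0" using zeros2[of "p @ [b]" i r True] h iN lp r_def k ls T_def by simp
      ultimately show False using iN sS tT by simp
    qed
    ultimately show "i \<in> {k, Suc k, Suc (Suc k)}" by auto
  qed
  have kin: "k \<in> DP" using k ls unfolding DP_def diff_positions_def by simp
  have key: "Suc (Suc k) \<in> DP \<Longrightarrow> Suc k \<in> DP"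
  proof (rule ccontr)
    assume h2: "Suc (Suc k) \<in> DP" and h1: "Suc k \<notin> DP"
    have lt2: "Suc (Suc k) < n" using h2 ls unfolding DP_def diff_positions_def by simp
    then obtain r' where r': "r = Suc (Suc r')" using r_def by (cases r; cases "r - 1") auto
    define x1 where "x1 = ch False (p @ [a])"
    define x2 where "x2 = ch False ((p @ [a]) @ [x1])"
    define y1 where "y1 = ch True (p @ [b])"
    define y2 where "y2 = ch True ((p @ [b]) @ [y1])"
    obtain u1 where u1: "S = ((p @ [a]) @ [x1, x2]) @ u1"
      using g_app[of False "((p @ [a]) @ [x1, x2])" r'] S_def r' x1_def x2_def by auto
    obtain u2 where u2: "T = ((p @ [b]) @ [y1, y2]) @ u2"
      using g_app[of True "((p @ [b]) @ [y1, y2])" r'] T_def r' y1_def y2_def by auto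
    have S1: "S ! Suc k = x1" "S ! Suc (Suc k) = x2" using u1 lp by (auto simp: nth_append)
    have T1: "T ! Suc k = y1" "T ! Suc (Suc k) = y2" using u2 lp by (auto simp: nth_append)
    have xy1: "x1 = y1" using h1 S1 T1 sS tT lt2 lS unfolding DP_def diff_positions_def by auto
    have xy2: "x2 \<noteq> y2" using h2 S1 T1 sS tT lt2 lS unfolding DP_def diff_positions_def by auto
    show False
    proof (cases "D (p @ [a])")
      case False
      then have "x1 = 0" by (simp add: x1_def ch_def)
      then have y10: "y1 = 0" using xy1 by simp
      then have Db: "D (p @ [b])" by (auto simp: y1_def ch_def split: if_splits)
      have "x2 = 0" using False \<open>x1 = 0\<close> by (simp add: x2_def ch_def D_snoc2 E0)
      moreover have "y2 = 0" using Db y10 by (simp add: y2_def ch_def D_snoc2 E0)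
      ultimately show False using xy2 by simp
    next
      case True
      then have x1v: "x1 = Max (set (p @ [a])) + 1" by (simp add: x1_def ch_def)
      then have "y1 \<noteq> 0" using xy1 by simp
      then have Db: "\<not> D (p @ [b])" by (auto simp: y1_def ch_def split: if_splits)
      then have y1v: "y1 = Max (set (p @ [b])) + 1" by (simp add: y1_def ch_def)
      have Ma: "Max (set ((p @ [a]) @ [x1])) = x1" using Max_snoc_succ[of "p @ [a]"] x1v by simp
      have Mb: "Max (set ((p @ [b]) @ [y1])) = y1" using Max_snoc_succ[of "p @ [b]"] y1v by simp
      have "x2 = (if E x1 then x1 + 1 else 0)"
        using True Ma by (simp add: x2_def ch_def D_snoc2 D_snoc)
      moreover have "y2 = (if E x1 then x1 + 1 else 0)"
        using Db Mb xy1 by (simp add: y2_def ch_def D_snoc2 D_snoc)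
      ultimately show False using xy2 by simp
    qed
  qed
  have "card DP \<le> card {k, Suc k, Suc (Suc k)}" using sub by (intro card_mono) auto
  also have "\<dots> \<le> 3" by (simp add: card_insert_if)
  finally have c3: "card DP \<le> 3" .
  have cont: "\<forall>a b c. a \<in> DP \<longrightarrow> c \<in> DP \<longrightarrow> a \<le> b \<longrightarrow> b \<le> c \<longrightarrow> b \<in> DP"
  proof (intro allI impI)
    fix a' b' c' assume h: "a' \<in> DP" "c' \<in> DP" "a' \<le> b'" "b' \<le> c'"
    then have "a' \<in> {k, Suc k, Suc (Suc k)}" "c' \<in> {k, Suc k, Suc (Suc k)}" using sub by auto
    then have ac: "a' = k \<or> a' = Suc k \<or> a' = Suc (Suc k)" "c' = k \<or> c' = Suc k \<or> c' = Suc (Suc k)"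
      by auto
    have "b' = k \<or> b' = Suc k \<or> b' = Suc (Suc k)" using h(3,4) ac by linarith
    then show "b' \<in> DP"
    proof (elim disjE)
      assume "b' = k" then show ?thesis using kin by simp
    next
      assume b: "b' = Suc k"
      then have "c' = Suc k \<or> c' = Suc (Suc k)" using h(4) ac(2) by linarith
      then show ?thesis using b h(2) key by blast
    next
      assume b: "b' = Suc (Suc k)"
      then have "c' = Suc (Suc k)" using h(4) ac(2) by linarith
      then show ?thesis using b h(2) by simp
    qed
  qed
  show ?thesis using c3 cont unfolding DP_def by blast
qed

theorem gray:
  assumes "set L = RGF n" "sorted_wrt lt L"
  shows "adjacent_gray_code 3 L"
  unfolding adjacent_gray_code_def Let_def
proof (intro allI impI)
  fix j assume j: "Suc j < length L"
  have srt: "\<And>i j. i < j \<Longrightarrow> j < length L \<Longrightarrow> lt (L ! i) (L ! j)"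
    using assms(2) unfolding sorted_wrt_iff_nth_less by blast
  have R: "L ! i \<in> RGF n" if "i < length L" for i
  proof -
    have "L ! i \<in> set L" using that by simp
    then show ?thesis using assms(1) by simp
  qed
  have nb: "\<forall>u\<in>RGF n. \<not> (lt (L ! j) u \<and> lt u (L ! Suc j))"
  proof (intro ballI notI)
    fix u assume u: "u \<in> RGF n" and h: "lt (L ! j) u \<and> lt u (L ! Suc j)"
    have "u \<in> set L" using u assms(1) by simp
    then obtain i where i: "i < length L" "u = L ! i" by (auto simp: in_set_conv_nth)
    show False
    proof (cases "i \<le> j")
      case True
      show ?thesis
      proof (cases "i = j")
        case True
        then show ?thesis using h i lt_asym by blast
      next
        case False
        then have "lt (L ! i) (L ! j)" using srt[of i j] j \<open>i \<le> j\<close> by simp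
        then show ?thesis using h i lt_asym by blast
      qed
    next
      case False
      show ?thesis
      proof (cases "i = Suc j")
        case True
        then show ?thesis using h i lt_asym by blast
      next
        case F2: False
        then have "lt (L ! Suc j) (L ! i)" using srt[of "Suc j" i] i False by simp
        then show ?thesis using h i lt_asym by blast
      qed
    qed
  qed
  have Rj: "L ! j \<in> RGF n" "L ! Suc j \<in> RGF n" using R j by auto
  have sj: "lt (L ! j) (L ! Suc j)" using srt[of j "Suc j"] j by simp
  show "card (diff_positions (L ! j) (L ! Suc j)) \<le> 3 \<and>
    (\<forall>a b c. a \<in> diff_positions (L ! j) (L ! Suc j) \<longrightarrow> c \<in> diff_positions (L ! j) (L ! Suc j)
       \<longrightarrow> a \<le> b \<longrightarrow> b \<le> c \<longrightarrow> b \<in> diff_positions (L ! j) (L ! Suc j))"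
    by (rule adj[OF Rj sj nb])
qed

end


interpretation r: gord "\<lambda>q. even (sum_list q)" "\<lambda>v. even v"
  by unfold_locales auto

definition Dc :: "nat list \<Rightarrow> bool" where
  "Dc q = even (card {i. i < length q \<and> q ! i \<noteq> 0 \<and> even (q ! i)})"

lemma Dc_snoc: "Dc (q @ [v]) = (Dc q = (v = 0 \<or> odd v))"
proof -
  define A where "A = {i. i < length q \<and> q ! i \<noteq> 0 \<and> even (q ! i)}"
  have fA: "finite A" unfolding A_def by simp
  have nA: "length q \<notin> A" unfolding A_def by simp
  have eq: "{i. i < length (q @ [v]) \<and> (q @ [v]) ! i \<noteq> 0 \<and> even ((q @ [v]) ! i)} =
    A \<union> (if v \<noteq> 0 \<and> even v then {length q} else {})"
    unfolding A_def by (auto simp: nth_append less_Suc_eq)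
  show ?thesis
  proof (cases "v \<noteq> 0 \<and> even v")
    case True
    then have "card (A \<union> {length q}) = Suc (card A)" using fA nA by simp
    then show ?thesis unfolding Dc_def using eq True A_def by simp
  next
    case False
    then show ?thesis unfolding Dc_def using eq A_def by auto
  qed
qed

interpretation c: gord Dc "\<lambda>v. v = 0 \<or> odd v"
  by unfold_locales (auto simp: Dc_snoc)

lemma rgc_eq: "rgc_less = r.lt"
  by (intro ext) (simp add: rgc_less_def r.lt_def)

lemma take_set_eq:
  "k < length s \<Longrightarrow> {i. i < length (take k s) \<and> take k s ! i \<noteq> 0 \<and> even (take k s ! i)} =
     {i. i < k \<and> s ! i \<noteq> 0 \<and> even (s ! i)}"
  by auto

lemma co_eq: "co_rgc_less = c.lt"
proof (intro ext)
  fix s t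
  show "co_rgc_less s t = c.lt s t"
  proof
    assume "co_rgc_less s t"
    then obtain k where k: "length s = length t" "k < length s" "take k s = take k t" "s ! k \<noteq> t ! k"
      "if even (card {i. i < k \<and> s ! i \<noteq> 0 \<and> even (s ! i)}) then s ! k < t ! k else s ! k > t ! k"
      unfolding co_rgc_less_def by blast
    then have "if Dc (take k s) then s ! k < t ! k else s ! k > t ! k"
      unfolding Dc_def using take_set_eq[OF k(2)] by simp
    then show "c.lt s t" unfolding c.lt_def using k by blast
  next
    assume "c.lt s t"
    then obtain k where k: "length s = length t" "k < length s" "take k s = take k t" "s ! k \<noteq> t ! k"
      "if Dc (take k s) then s ! k < t ! k else s ! k > t ! k"
      unfolding c.lt_def by blast
    then have "if even (card {i. i < k \<and> s ! i \<noteq> 0 \<and> even (s ! i)}) then s ! k < t ! k else s ! k > t ! k"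
      unfolding Dc_def using take_set_eq[OF k(2)] by simp
    then show "co_rgc_less s t" unfolding co_rgc_less_def using k by blast
  qed
qed

theorem corollary1:
  fixes n :: nat
  assumes "n \<ge> 1"
  shows "(\<forall>L. set L = RGF n \<and> sorted_wrt rgc_less L \<longrightarrow> adjacent_gray_code 3 L) \<and>
         (\<forall>L. set L = RGF n \<and> sorted_wrt co_rgc_less L \<longrightarrow> adjacent_gray_code 3 L)"
  unfolding rgc_eq co_eq using r.gray c.gray by blast

end
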